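(* Let $N$ be a simple-$\mathcal F$-divisible $R$-module which is supplemented. Then: (a) $N$ is hollow; (b) for every Artinian submodule $V\subsetneq N$ there exists $\mathfrak a_0\in\mathcal F$ with $\mathfrak a_0V=0$, and there is an epimorphism $N/V\twoheadrightarrow N$; (c) if moreover every submodule of $N$ is supplemented, then every nonzero factor module of $N$ is again simple-$\mathcal F$-divisible.
   Context: Throughout, $R$ is a commutative Noetherian local ring, and $\mathcal F$ is a Gabriel topology on $R$: a nonempty set of ideals of $R$ such that (1) if $\mathfrak a\in\mathcal F$ and $\mathfrak a\subseteq\mathfrak b$ then $\mathfrak b\in\mathcal F$; (2) if $\mathfrak a,\mathfrak b\in\mathcal F$ then $\mathfrak a\cap\mathfrak b\in\mathcal F$; (3) if $\mathfrak b$ is an ideal and there is $\mathfrak a\in\mathcal F$ with $(\mathfrak b:r)\in\mathcal F$ for all $r\in\mathfrak a$, then $\mathfrak b\in\mathcal F$. A module $X$ is $\mathcal F$-divisible if $\mathfrak aX=X$ for all $\mathfrak a\in\mathcal F$. $N$ is simple-$\mathcal F$-divisible if $N\ne0$, $N$ is $\mathcal F$-divisible, and no submodule $0\neq V\subsetneq N$ is $\mathcal F$-divisible. A module $N$ is supplemented if for every submodule $V\subseteq N$ there is a submodule $W$ (a supplement of $V$) which is minimal among submodules with $V+W=N$. A module $N\ne0$ is hollow (couniform) if every proper submodule $V\subsetneq N$ is small in $N$, i.e. $V+W=N$ implies $W=N$. *)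

theory Defs
  imports Main "HOL.Modules"
begin

definition is_ideal :: "'a::comm_ring_1 set \<Rightarrow> bool" where
  "is_ideal I \<longleftrightarrow> 0 \<in> I \<and> (\<forall>x\<in>I. \<forall>y\<in>I. x + y \<in> I) \<and> (\<forall>r. \<forall>x\<in>I. r * x \<in> I)"

definition noetherian_ring :: "'a::comm_ring_1 itself \<Rightarrow> bool" where
  "noetherian_ring _ \<longleftrightarrow>
     (\<forall>I::'a set. is_ideal I \<longrightarrow> (\<exists>S. finite S \<and> I = module.span (*) S))"

definition maximal_ideal :: "'a::comm_ring_1 set \<Rightarrow> bool" where
  "maximal_ideal m \<longleftrightarrow> is_ideal m \<and> m \<noteq> UNIV \<and>
     (\<forall>J. is_ideal J \<and> m \<subseteq> J \<longrightarrow> J = m \<or> J = UNIV)"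

definition local_ring :: "'a::comm_ring_1 itself \<Rightarrow> bool" where
  "local_ring _ \<longleftrightarrow> (\<exists>!m::'a set. maximal_ideal m)"

definition colon_ideal :: "'a::comm_ring_1 set \<Rightarrow> 'a \<Rightarrow> 'a set" where
  "colon_ideal b r = {s. s * r \<in> b}"

definition gabriel_topology :: "'a::comm_ring_1 set set \<Rightarrow> bool" where
  "gabriel_topology F \<longleftrightarrow>
     F \<noteq> {} \<and> (\<forall>a\<in>F. is_ideal a) \<and>
     (\<forall>a b. a \<in> F \<and> is_ideal b \<and> a \<subseteq> b \<longrightarrow> b \<in> F) \<and>
     (\<forall>a\<in>F. \<forall>b\<in>F. a \<inter> b \<in> F) \<and>
     (\<forall>b. is_ideal b \<and> (\<exists>a\<in>F. \<forall>r\<in>a. colon_ideal b r \<in> F) \<longrightarrow> b \<in> F)"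

text \<open>All modules are submodules (sets) of an ambient R-module given by
  the scalar multiplication sc on the type 'm.\<close>

definition msum :: "'m::ab_group_add set \<Rightarrow> 'm set \<Rightarrow> 'm set" where
  "msum V W = {v + w | v w. v \<in> V \<and> w \<in> W}"

definition ideal_mult ::
  "('a::comm_ring_1 \<Rightarrow> 'm::ab_group_add \<Rightarrow> 'm) \<Rightarrow> 'a set \<Rightarrow> 'm set \<Rightarrow> 'm set" where
  "ideal_mult sc a V = module.span sc {sc r v | r v. r \<in> a \<and> v \<in> V}"

definition F_divisible ::
  "('a::comm_ring_1 \<Rightarrow> 'm::ab_group_add \<Rightarrow> 'm) \<Rightarrow> 'a set set \<Rightarrow> 'm set \<Rightarrow> bool" where
  "F_divisible sc F X \<longleftrightarrow> (\<forall>a\<in>F. ideal_mult sc a X = X)"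

definition simple_F_divisible ::
  "('a::comm_ring_1 \<Rightarrow> 'm::ab_group_add \<Rightarrow> 'm) \<Rightarrow> 'a set set \<Rightarrow> 'm set \<Rightarrow> bool" where
  "simple_F_divisible sc F N \<longleftrightarrow> N \<noteq> {0} \<and> F_divisible sc F N \<and>
     (\<forall>V. module.subspace sc V \<and> V \<subseteq> N \<and> V \<noteq> {0} \<and> V \<noteq> N \<longrightarrow> \<not> F_divisible sc F V)"

text \<open>Factor modules W/V (for submodules V \<subseteq> W): the submodules of W/V are
  the U/V with V \<subseteq> U \<subseteq> W, and a(U/V) = (aU + V)/V. Hence U/V is
  F-divisible iff aU + V = U for all a in F, and U/V \<noteq> 0 iff V \<noteq> U.\<close>
definition F_divisible_quot ::
  "('a::comm_ring_1 \<Rightarrow> 'm::ab_group_add \<Rightarrow> 'm) \<Rightarrow> 'a set set \<Rightarrow> 'm set \<Rightarrow> 'm set \<Rightarrow> bool" where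
  "F_divisible_quot sc F V U \<longleftrightarrow> (\<forall>a\<in>F. msum (ideal_mult sc a U) V = U)"

definition simple_F_divisible_quot ::
  "('a::comm_ring_1 \<Rightarrow> 'm::ab_group_add \<Rightarrow> 'm) \<Rightarrow> 'a set set \<Rightarrow> 'm set \<Rightarrow> 'm set \<Rightarrow> bool" where
  "simple_F_divisible_quot sc F V N \<longleftrightarrow> V \<noteq> N \<and> F_divisible_quot sc F V N \<and>
     (\<forall>U. module.subspace sc U \<and> V \<subseteq> U \<and> U \<subseteq> N \<and> U \<noteq> V \<and> U \<noteq> N
          \<longrightarrow> \<not> F_divisible_quot sc F V U)"

definition is_supplement ::
  "('a::comm_ring_1 \<Rightarrow> 'm::ab_group_add \<Rightarrow> 'm) \<Rightarrow> 'm set \<Rightarrow> 'm set \<Rightarrow> 'm set \<Rightarrow> bool" where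
  "is_supplement sc N V W \<longleftrightarrow> module.subspace sc W \<and> W \<subseteq> N \<and> msum V W = N \<and>
     (\<forall>W'. module.subspace sc W' \<and> W' \<subseteq> W \<and> msum V W' = N \<longrightarrow> W' = W)"

definition supplemented ::
  "('a::comm_ring_1 \<Rightarrow> 'm::ab_group_add \<Rightarrow> 'm) \<Rightarrow> 'm set \<Rightarrow> bool" where
  "supplemented sc N \<longleftrightarrow>
     (\<forall>V. module.subspace sc V \<and> V \<subseteq> N \<longrightarrow> (\<exists>W. is_supplement sc N V W))"

definition small_in ::
  "('a::comm_ring_1 \<Rightarrow> 'm::ab_group_add \<Rightarrow> 'm) \<Rightarrow> 'm set \<Rightarrow> 'm set \<Rightarrow> bool" where
  "small_in sc V N \<longleftrightarrow>
     (\<forall>W. module.subspace sc W \<and> W \<subseteq> N \<and> msum V W = N \<longrightarrow> W = N)"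

definition hollow ::
  "('a::comm_ring_1 \<Rightarrow> 'm::ab_group_add \<Rightarrow> 'm) \<Rightarrow> 'm set \<Rightarrow> bool" where
  "hollow sc N \<longleftrightarrow> N \<noteq> {0} \<and>
     (\<forall>V. module.subspace sc V \<and> V \<subseteq> N \<and> V \<noteq> N \<longrightarrow> small_in sc V N)"

definition artinian ::
  "('a::comm_ring_1 \<Rightarrow> 'm::ab_group_add \<Rightarrow> 'm) \<Rightarrow> 'm set \<Rightarrow> bool" where
  "artinian sc V \<longleftrightarrow>
     (\<forall>f::nat \<Rightarrow> 'm set. (\<forall>n. module.subspace sc (f n) \<and> f n \<subseteq> V \<and> f (Suc n) \<subseteq> f n)
        \<longrightarrow> (\<exists>k. \<forall>n\<ge>k. f n = f k))"

definition linear_on ::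
  "('a::comm_ring_1 \<Rightarrow> 'm::ab_group_add \<Rightarrow> 'm) \<Rightarrow> 'm set \<Rightarrow> ('m \<Rightarrow> 'm) \<Rightarrow> bool" where
  "linear_on sc N f \<longleftrightarrow> (\<forall>x\<in>N. \<forall>y\<in>N. f (x + y) = f x + f y) \<and> (\<forall>r. \<forall>x\<in>N. f (sc r x) = sc r (f x))"

text \<open>An epimorphism N/V \<rightarrow>> N is the same as an R-linear surjection N \<rightarrow> N
  vanishing on V (universal property of the quotient).\<close>
definition epi_from_quotient ::
  "('a::comm_ring_1 \<Rightarrow> 'm::ab_group_add \<Rightarrow> 'm) \<Rightarrow> 'm set \<Rightarrow> 'm set \<Rightarrow> bool" where
  "epi_from_quotient sc N V \<longleftrightarrow>
     (\<exists>f. linear_on sc N f \<and> f ` N = N \<and> (\<forall>v\<in>V. f v = 0))"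

end

theory Submission
  imports Defs
begin


lemma mult_module: "module ((*) :: 'a::comm_ring_1 \<Rightarrow> 'a \<Rightarrow> 'a)"
  by unfold_locales (auto simp: algebra_simps)

lemma is_ideal_subspace: "is_ideal I \<longleftrightarrow> module.subspace ((*) :: 'a::comm_ring_1 \<Rightarrow> 'a \<Rightarrow> 'a) I"
  unfolding is_ideal_def module.subspace_def[OF mult_module] by auto

lemma msumI: "a \<in> A \<Longrightarrow> b \<in> B \<Longrightarrow> x = a + b \<Longrightarrow> x \<in> msum A B"
  unfolding msum_def by blast

context module begin

lemma msum_subspace:
  assumes "subspace A" "subspace B" shows "subspace (msum A B)"
proof (rule subspaceI)
  show "0 \<in> msum A B" using assms subspace_0 by (intro msumI[of 0 _ 0]) auto
next
  fix x y assume "x \<in> msum A B" "y \<in> msum A B"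
  then obtain a b a' b' where "x = a + b" "y = a' + b'" "a \<in> A" "b \<in> B" "a' \<in> A" "b' \<in> B"
    unfolding msum_def by auto
  then show "x + y \<in> msum A B"
    using assms subspace_add by (intro msumI[of "a+a'" _ "b+b'"]) (auto simp: algebra_simps)
next
  fix c x assume "x \<in> msum A B"
  then obtain a b where "x = a + b" "a \<in> A" "b \<in> B" unfolding msum_def by auto
  then show "c *s x \<in> msum A B"
    using assms subspace_scale by (intro msumI[of "c *s a" _ "c *s b"]) (auto simp: scale_right_distrib)
qed

lemma msum_zero_right: "subspace A \<Longrightarrow> msum A {0} = A"
  unfolding msum_def by auto

lemma msum_absorb: assumes "subspace A" "B \<subseteq> A" "subspace B" shows "msum A B = A"
proof
  show "msum A B \<subseteq> A" unfolding msum_def using assms subspace_add by blast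
  show "A \<subseteq> msum A B"
  proof
    fix x assume "x \<in> A"
    moreover have "x = x + 0" by simp
    ultimately show "x \<in> msum A B" unfolding msum_def using subspace_0[OF assms(3)] by blast
  qed
qed

lemma msum_absorb2: assumes "subspace A" "B \<subseteq> A" "subspace B" shows "msum B A = A"
proof
  show "msum B A \<subseteq> A" unfolding msum_def using assms subspace_add by blast
  show "A \<subseteq> msum B A"
  proof
    fix x assume "x \<in> A"
    moreover have "x = 0 + x" by simp
    ultimately show "x \<in> msum B A" unfolding msum_def using subspace_0[OF assms(3)] by blast
  qed
qed

lemma msum_mono: "A \<subseteq> A' \<Longrightarrow> B \<subseteq> B' \<Longrightarrow> msum A B \<subseteq> msum A' B'"
  unfolding msum_def by blast

lemma ideal_mult_subspace: "subspace (ideal_mult scale a V)"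
  unfolding ideal_mult_def by simp

lemma ideal_mult_sub: "subspace V \<Longrightarrow> ideal_mult scale a V \<subseteq> V"
  unfolding ideal_mult_def by (rule span_minimal) (auto intro: subspace_scale)

lemma ideal_mult_base: "r \<in> a \<Longrightarrow> v \<in> V \<Longrightarrow> r *s v \<in> ideal_mult scale a V"
  unfolding ideal_mult_def by (rule span_base) auto

lemma ideal_mult_msum:
  assumes "subspace A" "subspace B"
  shows "ideal_mult scale a (msum A B) \<subseteq> msum A (ideal_mult scale a B)"
  unfolding ideal_mult_def[of scale a "msum A B"]
proof (rule span_minimal)
  show "subspace (msum A (ideal_mult scale a B))"
    by (rule msum_subspace[OF assms(1) ideal_mult_subspace])
  show "{r *s v |r v. r \<in> a \<and> v \<in> msum A B} \<subseteq> msum A (ideal_mult scale a B)"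
  proof
    fix x assume "x \<in> {r *s v |r v. r \<in> a \<and> v \<in> msum A B}"
    then obtain r u w where "x = r *s (u + w)" "r \<in> a" "u \<in> A" "w \<in> B"
      unfolding msum_def by auto
    then show "x \<in> msum A (ideal_mult scale a B)"
      using subspace_scale[OF assms(1)] ideal_mult_base
      by (intro msumI[of "r *s u" _ "r *s w"]) (auto simp: scale_right_distrib)
  qed
qed

lemma supp_divisible:
  assumes V: "subspace V" and sup: "is_supplement scale U V W"
    and U: "subspace U"
    and q: "msum (ideal_mult scale a U) V = U"
  shows "ideal_mult scale a W = W"
proof -
  from sup have W: "subspace W" "W \<subseteq> U" and VW: "msum V W = U"
    and mn: "\<And>W'. subspace W' \<Longrightarrow> W' \<subseteq> W \<Longrightarrow> msum V W' = U \<Longrightarrow> W' = W"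
    unfolding is_supplement_def by auto
  have aW: "ideal_mult scale a W \<subseteq> W" by (rule ideal_mult_sub[OF W(1)])
  have "msum V (ideal_mult scale a W) = U"
  proof
    show "msum V (ideal_mult scale a W) \<subseteq> U"
      using msum_mono[OF order_refl aW, of V] VW by simp
    show "U \<subseteq> msum V (ideal_mult scale a W)"
    proof
      fix x assume "x \<in> U"
      then have "x \<in> msum (ideal_mult scale a U) V" using q by simp
      then obtain y v where xy: "x = y + v" "y \<in> ideal_mult scale a U" "v \<in> V"
        unfolding msum_def by auto
      from xy(2) ideal_mult_msum[OF V W(1), of a] VW obtain v' w where
        "y = v' + w" "v' \<in> V" "w \<in> ideal_mult scale a W" unfolding msum_def by auto
      with xy show "x \<in> msum V (ideal_mult scale a W)"
        using subspace_add[OF V]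
        by (intro msumI[of "v' + v" _ w]) (auto simp: algebra_simps)
    qed
  qed
  then show ?thesis using mn[OF ideal_mult_subspace aW] by simp
qed


end

context module begin
lemma hollow_of:
  assumes N: "subspace N" and simple: "simple_F_divisible scale F N"
    and supp: "supplemented scale N"
  shows "hollow scale N"
proof -
  have N0: "N \<noteq> {0}" and div: "\<And>a. a \<in> F \<Longrightarrow> ideal_mult scale a N = N"
    and sim: "\<And>X. subspace X \<Longrightarrow> X \<subseteq> N \<Longrightarrow> X \<noteq> {0} \<Longrightarrow> X \<noteq> N \<Longrightarrow> \<not> F_divisible scale F X"
    using simple unfolding simple_F_divisible_def F_divisible_def by auto
  show ?thesis unfolding hollow_def small_in_def
  proof (intro conjI allI impI)
    show "N \<noteq> {0}" by (rule N0)
    fix V W assume V: "subspace V \<and> V \<subseteq> N \<and> V \<noteq> N"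
      and W: "subspace W \<and> W \<subseteq> N \<and> msum V W = N"
    obtain S where S: "is_supplement scale N V S" using supp V unfolding supplemented_def by blast
    have Sdiv: "F_divisible scale F S"
      unfolding F_divisible_def
    proof
      fix a assume "a \<in> F"
      have "msum (ideal_mult scale a N) V = N"
        using div[OF \<open>a \<in> F\<close>] msum_absorb[OF N] V by simp
      then show "ideal_mult scale a S = S"
        using supp_divisible[OF _ S N] V by simp
    qed
    have Ss: "subspace S" "S \<subseteq> N" "msum V S = N"
      and mn: "\<And>W'. subspace W' \<Longrightarrow> W' \<subseteq> S \<Longrightarrow> msum V W' = N \<Longrightarrow> W' = S"
      using S unfolding is_supplement_def by auto
    have "S \<noteq> {0}"
    proof
      assume "S = {0}"
      then have "msum V S = V" using msum_zero_right V by simp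
      then show False using Ss V by simp
    qed
    then have "S = N" using sim[OF Ss(1) Ss(2)] Sdiv by blast
    then show "W = N" using mn[of W] W by simp
  qed
qed

lemma artinian_min:
  assumes art: "artinian scale V" and ne: "S \<noteq> {}" and sub: "\<forall>X\<in>S. subspace X \<and> X \<subseteq> V"
  shows "\<exists>X\<in>S. \<forall>Y\<in>S. Y \<subseteq> X \<longrightarrow> Y = X"
proof (rule ccontr)
  assume "\<not> ?thesis"
  then have ex: "\<forall>X\<in>S. \<exists>Y\<in>S. Y \<subset> X" by blast
  define g where "g X = (SOME Y. Y \<in> S \<and> Y \<subset> X)" for X
  have g: "g X \<in> S \<and> g X \<subset> X" if "X \<in> S" for X
  proof -
    from ex that obtain Y where "Y \<in> S \<and> Y \<subset> X" by blast
    then show ?thesis unfolding g_def by (rule someI)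
  qed
  obtain X0 where X0: "X0 \<in> S" using ne by blast
  define f where "f n = (g ^^ n) X0" for n
  have fS: "f n \<in> S" for n
  proof (induct n)
    case 0 then show ?case using X0 by (simp add: f_def)
  next
    case (Suc n) then show ?case using g[OF Suc] by (simp add: f_def)
  qed
  have fs: "f (Suc n) \<subset> f n" for n using g[OF fS[of n]] by (simp add: f_def)
  have "\<forall>n. subspace (f n) \<and> f n \<subseteq> V \<and> f (Suc n) \<subseteq> f n"
  proof
    fix n show "subspace (f n) \<and> f n \<subseteq> V \<and> f (Suc n) \<subseteq> f n"
      using sub fS[of n] fs[of n] by simp
  qed
  moreover have "(\<forall>n. subspace (f n) \<and> f n \<subseteq> V \<and> f (Suc n) \<subseteq> f n) \<longrightarrow> (\<exists>k. \<forall>n\<ge>k. f n = f k)"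
    using art unfolding artinian_def by (rule spec)
  ultimately have "\<exists>k. \<forall>n\<ge>k. f n = f k" by (rule rev_mp)
  then obtain k where "\<forall>n\<ge>k. f n = f k" by blast
  then have "f (Suc k) = f k" by (meson le_SucI order_refl)
  then show False using fs[of k] by simp
qed

end

lemma prod_ideal_in_F:
  fixes F :: "'a::comm_ring_1 set set"
  assumes gab: "gabriel_topology F" and a: "a \<in> F" and b: "b \<in> F"
  shows "module.span (*) {x * y | x y. x \<in> b \<and> y \<in> a} \<in> F"
proof -
  let ?P = "module.span (*) {x * y | x y. x \<in> b \<and> y \<in> a}"
  have R: "module ((*) :: 'a \<Rightarrow> 'a \<Rightarrow> 'a)" by (rule mult_module)
  have Pid: "is_ideal ?P" unfolding is_ideal_subspace by (rule module.subspace_span[OF R])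
  have up: "\<And>c d. c \<in> F \<Longrightarrow> is_ideal d \<Longrightarrow> c \<subseteq> d \<Longrightarrow> d \<in> F"
    and cl: "\<And>d. is_ideal d \<Longrightarrow> (\<exists>c\<in>F. \<forall>r\<in>c. colon_ideal d r \<in> F) \<Longrightarrow> d \<in> F"
    using gab unfolding gabriel_topology_def by blast+
  have "\<forall>r\<in>a. colon_ideal ?P r \<in> F"
  proof
    fix r assume r: "r \<in> a"
    have "is_ideal (colon_ideal ?P r)"
      unfolding is_ideal_def colon_ideal_def
    proof (intro conjI ballI allI)
      show "0 \<in> {s. s * r \<in> ?P}" using module.span_zero[OF R] by simp
      fix x y assume "x \<in> {s. s * r \<in> ?P}" "y \<in> {s. s * r \<in> ?P}"
      then show "x + y \<in> {s. s * r \<in> ?P}"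
        using module.span_add[OF R] by (simp add: distrib_right)
    next
      fix c x assume "x \<in> {s. s * r \<in> ?P}"
      then show "c * x \<in> {s. s * r \<in> ?P}"
        using module.span_scale[OF R] by (simp add: mult.assoc)
    qed
    moreover have "b \<subseteq> colon_ideal ?P r"
      unfolding colon_ideal_def using r by (auto intro!: module.span_base[OF R])
    ultimately show "colon_ideal ?P r \<in> F" using up[OF b] by blast
  qed
  then show ?thesis using cl[OF Pid] a by blast
qed

context module begin

lemma prod_ideal_mult:
  "ideal_mult scale (module.span (*) {x * y | x y. x \<in> b \<and> y \<in> a}) V
     \<subseteq> ideal_mult scale b (ideal_mult scale a V)"
  unfolding ideal_mult_def[of scale "module.span (*) _" V]
proof (rule span_minimal)
  let ?T = "ideal_mult scale b (ideal_mult scale a V)"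
  show "subspace ?T" by (rule ideal_mult_subspace)
  show "{r *s v |r v. r \<in> module.span (*) {x * y |x y. x \<in> b \<and> y \<in> a} \<and> v \<in> V} \<subseteq> ?T"
  proof
    fix z assume "z \<in> {r *s v |r v. r \<in> module.span (*) {x * y |x y. x \<in> b \<and> y \<in> a} \<and> v \<in> V}"
    then obtain r v where z: "z = r *s v" and r: "r \<in> module.span (*) {x * y |x y. x \<in> b \<and> y \<in> a}"
      and v: "v \<in> V" by blast
    have "r \<in> {p. p *s v \<in> ?T}"
      using r
    proof (rule module.span_subspace_induct[OF mult_module])
      show "module.subspace (*) {p. p *s v \<in> ?T}"
      proof (rule module.subspaceI[OF mult_module])
        show "0 \<in> {p. p *s v \<in> ?T}" using subspace_0[OF ideal_mult_subspace] by simp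
        show "x + y \<in> {p. p *s v \<in> ?T}" if "x \<in> {p. p *s v \<in> ?T}" "y \<in> {p. p *s v \<in> ?T}" for x y
          using that subspace_add[OF ideal_mult_subspace] by (simp add: scale_left_distrib)
        show "c * x \<in> {p. p *s v \<in> ?T}" if "x \<in> {p. p *s v \<in> ?T}" for c x
          using that subspace_scale[OF ideal_mult_subspace] by (simp flip: scale_scale)
      qed
      show "x \<in> {p. p *s v \<in> ?T}" if "x \<in> {x * y |x y. x \<in> b \<and> y \<in> a}" for x
        using that v ideal_mult_base by (auto simp flip: scale_scale)
    qed
    then show "z \<in> ?T" using z by simp
  qed
qed

lemma artinian_annihilated:
  assumes gab: "gabriel_topology F" and simple: "simple_F_divisible scale F N"
    and V: "subspace V" "V \<subseteq> N" "V \<noteq> N" and art: "artinian scale V"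
  shows "\<exists>a0\<in>F. ideal_mult scale a0 V = {0}"
proof -
  let ?S = "(\<lambda>c. ideal_mult scale c V) ` F"
  have "F \<noteq> {}" using gab unfolding gabriel_topology_def by (elim conjE)
  then have "?S \<noteq> {}" by blast
  moreover have "\<forall>X\<in>?S. subspace X \<and> X \<subseteq> V"
    using ideal_mult_subspace ideal_mult_sub[OF V(1)] by blast
  ultimately have "\<exists>X\<in>?S. \<forall>Y\<in>?S. Y \<subseteq> X \<longrightarrow> Y = X"
    by (rule artinian_min[OF art])
  then obtain X where X: "X \<in> ?S" and Xm: "\<forall>Y\<in>?S. Y \<subseteq> X \<longrightarrow> Y = X"
    by (elim bexE)
  from X obtain a where a: "a \<in> F" and Xa: "X = ideal_mult scale a V" by blast
  have mn: "ideal_mult scale c V = ideal_mult scale a V"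
    if "c \<in> F" "ideal_mult scale c V \<subseteq> ideal_mult scale a V" for c
    using Xm that Xa by blast
  let ?X = "ideal_mult scale a V"
  have div: "F_divisible scale F ?X"
    unfolding F_divisible_def
  proof
    fix b assume b: "b \<in> F"
    let ?P = "module.span (*) {x * y | x y. x \<in> b \<and> y \<in> a}"
    have P: "?P \<in> F" by (rule prod_ideal_in_F[OF gab a b])
    have 1: "ideal_mult scale ?P V \<subseteq> ideal_mult scale b ?X" by (rule prod_ideal_mult)
    have 2: "ideal_mult scale b ?X \<subseteq> ?X" by (rule ideal_mult_sub[OF ideal_mult_subspace])
    have "ideal_mult scale ?P V = ?X" using mn[OF P] 1 2 by blast
    then show "ideal_mult scale b ?X = ?X" using 1 2 by blast
  qed
  have sim: "\<And>X. subspace X \<Longrightarrow> X \<subseteq> N \<Longrightarrow> X \<noteq> {0} \<Longrightarrow> X \<noteq> N \<Longrightarrow> \<not> F_divisible scale F X"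
    using simple unfolding simple_F_divisible_def by auto
  have "?X \<subseteq> V" by (rule ideal_mult_sub[OF V(1)])
  then have "?X \<subseteq> N" "?X \<noteq> N" using V by auto
  then have "?X = {0}" using sim[OF ideal_mult_subspace] div by blast
  then show ?thesis using a by blast
qed

end

context module begin

lemma image_scale_subspace:
  assumes N: "subspace N" shows "subspace ((\<lambda>x. s *s x) ` N)"
proof (rule subspaceI)
  show "0 \<in> (\<lambda>x. s *s x) ` N"
  proof
    show "0 = s *s 0" by simp
    show "0 \<in> N" by (rule subspace_0[OF N])
  qed
next
  fix x y assume "x \<in> (\<lambda>x. s *s x) ` N" "y \<in> (\<lambda>x. s *s x) ` N"
  then obtain u w where "x = s *s u" "y = s *s w" "u \<in> N" "w \<in> N" by blast
  then show "x + y \<in> (\<lambda>x. s *s x) ` N"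
    using subspace_add[OF N] by (intro image_eqI[of _ _ "u + w"]) (simp_all add: scale_right_distrib)
next
  fix c x assume "x \<in> (\<lambda>x. s *s x) ` N"
  then obtain u where "x = s *s u" "u \<in> N" by blast
  then show "c *s x \<in> (\<lambda>x. s *s x) ` N"
    using subspace_scale[OF N] by (intro image_eqI[of _ _ "c *s u"]) (simp_all add: scale_left_commute mult.commute)
qed

lemma epi_exists:
  assumes noeth: "noetherian_ring TYPE('a)" and gab: "gabriel_topology F"
    and N: "subspace N" and simple: "simple_F_divisible scale F N"
    and hol: "hollow scale N" and a0: "a0 \<in> F" and ann: "ideal_mult scale a0 V = {0}"
  shows "epi_from_quotient scale N V"
proof -
  have R: "module ((*) :: 'a \<Rightarrow> 'a \<Rightarrow> 'a)" by (rule mult_module)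
  have "\<forall>a\<in>F. is_ideal a" using gab unfolding gabriel_topology_def by (elim conjE)
  then have "is_ideal a0" using a0 by (rule bspec)
  then obtain S where finS: "finite S" and a0S: "a0 = module.span (*) S"
    using noeth unfolding noetherian_ring_def by blast
  have N0: "N \<noteq> {0}" and div: "ideal_mult scale a0 N = N"
    using simple a0 unfolding simple_F_divisible_def F_divisible_def by auto
  have small: "\<And>X W. subspace X \<Longrightarrow> X \<subseteq> N \<Longrightarrow> X \<noteq> N \<Longrightarrow> subspace W \<Longrightarrow> W \<subseteq> N
       \<Longrightarrow> msum X W = N \<Longrightarrow> W = N"
    using hol unfolding hollow_def small_in_def by blast
  have imgN: "(\<lambda>x. s *s x) ` N \<subseteq> N" for s using subspace_scale[OF N] by blast
  have key: "\<exists>s\<in>S. (\<lambda>x. s *s x) ` N = N"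
  proof (rule ccontr)
    assume nk: "\<not> ?thesis"
    define M where "M T = span (\<Union>s\<in>T. (\<lambda>x. s *s x) ` N)" for T
    have MN: "M T \<subseteq> N" for T unfolding M_def by (rule span_minimal) (use imgN N in blast)+
    have MT: "finite T \<Longrightarrow> T \<subseteq> S \<Longrightarrow> M T \<noteq> N" for T
    proof (induct T rule: finite_induct)
      case empty
      then show ?case using N0 by (simp add: M_def)
    next
      case (insert s T)
      have sp: "span ((\<lambda>x. s *s x) ` N) = (\<lambda>x. s *s x) ` N"
        using image_scale_subspace[OF N] by simp
      have "M (insert s T) = span ((\<lambda>x. s *s x) ` N \<union> (\<Union>s\<in>T. (\<lambda>x. s *s x) ` N))"
        unfolding M_def by (simp add: Un_commute)
      also have "\<dots> = msum ((\<lambda>x. s *s x) ` N) (M T)"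
        unfolding span_Un msum_def M_def sp by simp
      finally have eq: "M (insert s T) = msum ((\<lambda>x. s *s x) ` N) (M T)" .
      have ns: "(\<lambda>x. s *s x) ` N \<noteq> N" using nk insert by blast
      show ?case
      proof
        assume "M (insert s T) = N"
        then have "msum ((\<lambda>x. s *s x) ` N) (M T) = N" using eq by simp
        then have "M T = N"
          using small[OF image_scale_subspace[OF N] imgN ns _ MN] unfolding M_def by simp
        then show False using insert by simp
      qed
    qed
    have MS: "M S \<noteq> N" using MT[OF finS] by simp
    have "ideal_mult scale a0 N \<subseteq> M S"
      unfolding ideal_mult_def
    proof (rule span_minimal)
      show "subspace (M S)" unfolding M_def by simp
      show "{r *s v |r v. r \<in> a0 \<and> v \<in> N} \<subseteq> M S"
      proof
        fix z assume "z \<in> {r *s v |r v. r \<in> a0 \<and> v \<in> N}"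
        then obtain r v where z: "z = r *s v" and r: "r \<in> module.span (*) S" and v: "v \<in> N"
          using a0S by blast
        have "r \<in> {p. p *s v \<in> M S}"
          using r
        proof (rule module.span_subspace_induct[OF mult_module])
          have MSs: "subspace (M S)" unfolding M_def by simp
          show "module.subspace (*) {p. p *s v \<in> M S}"
          proof (rule module.subspaceI[OF mult_module])
            show "0 \<in> {p. p *s v \<in> M S}" using subspace_0[OF MSs] by simp
            show "x + y \<in> {p. p *s v \<in> M S}" if "x \<in> {p. p *s v \<in> M S}" "y \<in> {p. p *s v \<in> M S}" for x y
              using that subspace_add[OF MSs] by (simp add: scale_left_distrib)
            show "c * x \<in> {p. p *s v \<in> M S}" if "x \<in> {p. p *s v \<in> M S}" for c x
              using that subspace_scale[OF MSs] by (simp flip: scale_scale)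
          qed
          show "x \<in> {p. p *s v \<in> M S}" if "x \<in> S" for x
          proof -
            have "x *s v \<in> (\<Union>s\<in>S. (\<lambda>x. s *s x) ` N)" using that v by blast
            then show ?thesis unfolding M_def by (simp add: span_base)
          qed
        qed
        then show "z \<in> M S" using z by simp
      qed
    qed
    then show False using div MN[of S] MS by simp
  qed
  then obtain s where s: "s \<in> S" and sN: "(\<lambda>x. s *s x) ` N = N" by (elim bexE)
  have sa0: "s \<in> a0" unfolding a0S by (rule module.span_base[OF mult_module s])
  have lin: "linear_on scale N (\<lambda>x. s *s x)"
    unfolding linear_on_def by (simp add: scale_right_distrib mult.commute)
  have van: "\<forall>v\<in>V. s *s v = 0"
  proof
    fix v assume "v \<in> V"
    then have "s *s v \<in> ideal_mult scale a0 V" by (rule ideal_mult_base[OF sa0])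
    then show "s *s v = 0" using ann by simp
  qed
  show ?thesis unfolding epi_from_quotient_def using lin sN van by blast
qed

lemma quot_simple:
  assumes N: "subspace N" and simple: "simple_F_divisible scale F N"
    and allsupp: "\<forall>U. subspace U \<and> U \<subseteq> N \<longrightarrow> supplemented scale U"
    and V: "subspace V" "V \<subseteq> N" "V \<noteq> N"
  shows "simple_F_divisible_quot scale F V N"
proof -
  have div: "\<And>a. a \<in> F \<Longrightarrow> ideal_mult scale a N = N"
    using simple unfolding simple_F_divisible_def F_divisible_def by auto
  have sim: "\<And>X. subspace X \<Longrightarrow> X \<subseteq> N \<Longrightarrow> X \<noteq> {0} \<Longrightarrow> X \<noteq> N \<Longrightarrow> \<not> F_divisible scale F X"
    using simple unfolding simple_F_divisible_def by auto
  have q: "F_divisible_quot scale F V N"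
    unfolding F_divisible_quot_def using div msum_absorb[OF N V(2) V(1)] by simp
  have nq: "\<not> F_divisible_quot scale F V U"
    if U: "subspace U" "V \<subseteq> U" "U \<subseteq> N" "U \<noteq> V" "U \<noteq> N" for U
  proof
    assume qU: "F_divisible_quot scale F V U"
    have "supplemented scale U" using allsupp U by blast
    then obtain W where W: "is_supplement scale U V W"
      using V(1) U(2) unfolding supplemented_def by blast
    have Ws: "subspace W" "W \<subseteq> U" "msum V W = U" using W unfolding is_supplement_def by auto
    have Wd: "F_divisible scale F W"
      unfolding F_divisible_def
    proof
      fix a assume "a \<in> F"
      then have "msum (ideal_mult scale a U) V = U" using qU unfolding F_divisible_quot_def by blast
      then show "ideal_mult scale a W = W" by (rule supp_divisible[OF V(1) W U(1)])
    qed
    have "W \<noteq> {0}"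
    proof
      assume "W = {0}"
      then have "U = V" using Ws msum_zero_right[OF V(1)] by simp
      then show False using U by simp
    qed
    moreover have "W \<noteq> N"
    proof
      assume "W = N"
      then have "U = N" using Ws U by blast
      then show False using U by simp
    qed
    ultimately show False using sim[OF Ws(1)] Wd Ws U by blast
  qed
  show ?thesis unfolding simple_F_divisible_quot_def using V q nq by blast
qed

end

theorem lemma3p1:
  fixes sc :: "'a::comm_ring_1 \<Rightarrow> 'm::ab_group_add \<Rightarrow> 'm"
    and F :: "'a set set" and N :: "'m set"
  assumes "noetherian_ring TYPE('a)" and "local_ring TYPE('a)"
    and "gabriel_topology F"
    and "module sc"
    and "module.subspace sc N"
    and "simple_F_divisible sc F N"
    and "supplemented sc N"
  shows "hollow sc N \<and>
    (\<forall>V. module.subspace sc V \<and> V \<subseteq> N \<and> V \<noteq> N \<and> artinian sc V \<longrightarrow>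
           (\<exists>a0\<in>F. ideal_mult sc a0 V = {0}) \<and> epi_from_quotient sc N V) \<and>
    ((\<forall>U. module.subspace sc U \<and> U \<subseteq> N \<longrightarrow> supplemented sc U) \<longrightarrow>
           (\<forall>V. module.subspace sc V \<and> V \<subseteq> N \<and> V \<noteq> N \<longrightarrow> simple_F_divisible_quot sc F V N))"
proof (intro conjI allI impI)
  have H: "hollow sc N" by (rule module.hollow_of[OF assms(4) assms(5) assms(6) assms(7)])
  then show "hollow sc N" .
  fix V assume V: "module.subspace sc V \<and> V \<subseteq> N \<and> V \<noteq> N \<and> artinian sc V"
  then have ex: "\<exists>a0\<in>F. ideal_mult sc a0 V = {0}"
    using module.artinian_annihilated[OF assms(4) assms(3) assms(6)] by blast
  then show "\<exists>a0\<in>F. ideal_mult sc a0 V = {0}" .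
  from ex obtain a0 where "a0 \<in> F" "ideal_mult sc a0 V = {0}" by (elim bexE)
  then show "epi_from_quotient sc N V"
    by (rule module.epi_exists[OF assms(4) assms(1) assms(3) assms(5) assms(6) H])
next
  fix V assume "\<forall>U. module.subspace sc U \<and> U \<subseteq> N \<longrightarrow> supplemented sc U"
    and "module.subspace sc V \<and> V \<subseteq> N \<and> V \<noteq> N"
  then show "simple_F_divisible_quot sc F V N"
    using module.quot_simple[OF assms(4) assms(5) assms(6)] by blast
qed

end
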